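(* Let $G$ be a finite graph. Then there exist a positive integer $n$ and a modular sumset labeling $f:V(G)\to\mathscr{P}(\mathbb{Z}_n)$ of $G$. Moreover, there exist a positive integer $n$ and a modular sumset indexer $f:V(G)\to\mathscr{P}(\mathbb{Z}_n)$ of $G$.
   Context: Graphs are simple and finite, without isolated vertices. For a positive integer $n$, $\mathbb{Z}_n$ denotes the set of non-negative integers modulo $n$ and $\mathscr{P}(\mathbb{Z}_n)$ its power set. For $A,B\subseteq\mathbb{Z}_n$ the modular sumset is $A+B=\{x\in\mathbb{Z}_n : x\equiv a+b \pmod n \text{ for some } a\in A,\ b\in B\}$. A modular sumset labeling of $G$ is an injective function $f:V(G)\to\mathscr{P}(\mathbb{Z}_n)$ assigning non-empty subsets to vertices, with induced edge function $f^+:E(G)\to\mathscr{P}(\mathbb{Z}_n)$, $f^+(uv)=f(u)+f(v)$. A modular sumset indexer is a modular sumset labeling $f$ whose induced function $f^+$ is also injective. *)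

theory Defs
  imports Main
begin

definition simple_graph :: "'v set \<Rightarrow> 'v set set \<Rightarrow> bool" where
  "simple_graph V E \<longleftrightarrow> finite V \<and> (\<forall>e\<in>E. e \<subseteq> V \<and> card e = 2)
     \<and> (\<forall>v\<in>V. \<exists>e\<in>E. v \<in> e)"

text \<open>Z_n is represented as {0..<n} :: nat set; subsets of Z_n as subsets of it.\<close>
definition mod_sumset :: "nat \<Rightarrow> nat set \<Rightarrow> nat set \<Rightarrow> nat set" where
  "mod_sumset n A B = {x \<in> {..<n}. \<exists>a\<in>A. \<exists>b\<in>B. x = (a + b) mod n}"

definition edge_label :: "nat \<Rightarrow> ('v \<Rightarrow> nat set) \<Rightarrow> 'v set \<Rightarrow> nat set" where
  "edge_label n f e = (THE S. \<exists>u v. e = {u, v} \<and> u \<noteq> v \<and> S = mod_sumset n (f u) (f v))"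

definition modular_sumset_labeling :: "'v set \<Rightarrow> 'v set set \<Rightarrow> nat \<Rightarrow> ('v \<Rightarrow> nat set) \<Rightarrow> bool" where
  "modular_sumset_labeling V E n f \<longleftrightarrow>
     (\<forall>v\<in>V. f v \<noteq> {} \<and> f v \<subseteq> {..<n}) \<and> inj_on f V"

definition modular_sumset_indexer :: "'v set \<Rightarrow> 'v set set \<Rightarrow> nat \<Rightarrow> ('v \<Rightarrow> nat set) \<Rightarrow> bool" where
  "modular_sumset_indexer V E n f \<longleftrightarrow>
     modular_sumset_labeling V E n f \<and> inj_on (edge_label n f) E"

end

theory Submission
  imports Defs
begin

lemma sumset_calc:
  assumes "a + b < n"
  shows "mod_sumset n {0, a} {0, b} = {0, a, b, a + b}"
  using assms unfolding mod_sumset_def by auto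

lemma sym_sumset: "mod_sumset n A B = mod_sumset n B A"
  unfolding mod_sumset_def by (metis add.commute)

lemma edge_label_eq:
  assumes "u \<noteq> v"
  shows "edge_label n f {u, v} = mod_sumset n (f u) (f v)"
  unfolding edge_label_def
proof (rule the_equality)
  show "\<exists>x y. {u, v} = {x, y} \<and> x \<noteq> y \<and> mod_sumset n (f u) (f v) = mod_sumset n (f x) (f y)"
    using assms by blast
next
  fix S assume "\<exists>x y. {u, v} = {x, y} \<and> x \<noteq> y \<and> S = mod_sumset n (f x) (f y)"
  then obtain x y where "{u, v} = {x, y}" "S = mod_sumset n (f x) (f y)" by blast
  then show "S = mod_sumset n (f u) (f v)"
    by (metis doubleton_eq_iff sym_sumset)
qed

theorem mainTheorem1:
  fixes V :: "'v set" and E :: "'v set set"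
  assumes "simple_graph V E"
  shows "(\<exists>n>0. \<exists>f. modular_sumset_labeling V E n f)
       \<and> (\<exists>n>0. \<exists>f. modular_sumset_indexer V E n f)"
proof -
  have fin: "finite V" and edges: "\<And>e. e \<in> E \<Longrightarrow> e \<subseteq> V \<and> card e = 2"
    using assms unfolding simple_graph_def by auto
  define N where "N = card V"
  obtain h where h: "bij_betw h V {0..<N}"
    using ex_bij_betw_finite_nat[OF fin] N_def by blast
  have hlt: "\<And>w. w \<in> V \<Longrightarrow> h w < N" using h by (auto simp: bij_betw_def)
  have hinj: "inj_on h V" using h by (auto simp: bij_betw_def)
  define n where "n = 4 * N + 1"
  define f where "f w = {0, N + h w}" for w
  have lab: "modular_sumset_labeling V E n f"
    unfolding modular_sumset_labeling_def
  proof
    show "\<forall>v\<in>V. f v \<noteq> {} \<and> f v \<subseteq> {..<n}"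
      using hlt by (fastforce simp: f_def n_def)
    show "inj_on f V"
    proof (rule inj_onI)
      fix x y assume xy: "x \<in> V" "y \<in> V" "f x = f y"
      then have "N + h x = N + h y"
        unfolding f_def using hlt[of x] hlt[of y] by (auto simp: doubleton_eq_iff)
      then show "x = y" using hinj xy by (auto dest: inj_onD)
    qed
  qed
  have rec: "e = {w \<in> V. N + h w \<in> edge_label n f e}" if e: "e \<in> E" for e
  proof -
    from edges[OF e] obtain u v where uv: "e = {u, v}" "u \<noteq> v"
      by (meson card_2_iff)
    have V: "u \<in> V" "v \<in> V" using edges[OF e] uv by auto
    have "edge_label n f e = {0, N + h u, N + h v, N + h u + (N + h v)}"
      using uv edge_label_eq[OF uv(2)] sumset_calc[of "N + h u" "N + h v" n]
        hlt[OF V(1)] hlt[OF V(2)] by (simp add: f_def n_def)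
    moreover have "\<And>w. w \<in> V \<Longrightarrow> N + h w \<noteq> 0" using hlt by fastforce
    moreover have "\<And>w. w \<in> V \<Longrightarrow> N + h w \<noteq> N + h u + (N + h v)" using hlt by fastforce
    moreover have "\<And>w. w \<in> V \<Longrightarrow> N + h w = N + h u \<Longrightarrow> w = u"
      using hinj V by (auto dest: inj_onD)
    moreover have "\<And>w. w \<in> V \<Longrightarrow> N + h w = N + h v \<Longrightarrow> w = v"
      using hinj V by (auto dest: inj_onD)
    moreover have "N > 0" using hlt[OF V(1)] by simp
    ultimately show ?thesis using uv V by (auto simp del: add_is_0)
  qed
  have "inj_on (edge_label n f) E"
  proof (rule inj_onI)
    fix x y assume "x \<in> E" "y \<in> E" "edge_label n f x = edge_label n f y"
    then show "x = y" using rec[of x] rec[of y] by simp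
  qed
  then have "modular_sumset_indexer V E n f"
    using lab unfolding modular_sumset_indexer_def by simp
  moreover have "n > 0" by (simp add: n_def)
  ultimately show ?thesis using lab by blast
qed

end
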